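(* Assume $0<q_{00}<1$, $\theta_1>0$, that $p_{00}$ and $p_{10}$ have finite moment generating functions in a neighbourhood of $0$, and that $M$ is diagonalizable. Let $\mu_t=\mathbb E[Y_t]$ and, for integers $k\ge1$, $\mu^0_k=\frac{\theta_1}{q_{00}}(M^k)_{00}$ (the expectation of $Y_k$ when $\nu=e_0$). Then the covariance matrix $\Sigma_{tt'}=\mathrm{Cov}(Y_t,Y_{t'})$ satisfies, for $t=1,\dots,T$, $$\Sigma_{tt}=\big(\theta_1(\theta_3+1)+1-\mu_t\big)\mu_t,$$ and for $1\le t'<t\le T$, $$\Sigma_{tt'}=\left[\Big(\theta_2-q_{00}\frac{1-\theta_2}{1-q_{00}}\Big)\mu^0_{t-t'}+\frac{1-\theta_2}{1-q_{00}}\mu^0_{t-t'+1}-\mu_t\right]\mu_{t'}.$$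
   Context: Hidden two-timescale Markov model (HTMM). Fix integers $r\ge 1$, $T\ge 1$ and $\mathcal S=\{0,1,\dots,r\}$. Let $q_{xz}\in[0,1]$ for $x\in\mathcal S$, $z\in\{0,\dots,r-1\}$, with $\sum_{x}q_{xz}=1$ for each such $z$. Define column-stochastic matrices $M^{\ell}$, $M^{s}$ indexed by $\mathcal S$: column $0$ of $M^\ell$ is $e_0$, column $r$ of $M^\ell$ is $e_r$, $M^\ell_{xz}=q_{xz}$ for $1\le z\le r-1$; column $0$ of $M^s$ is $(q_{00},\dots,q_{r0})^{\mathrm T}$ and $M^s_{xz}=\delta_{xz}$ for $z\ge 1$. Set $M=M^sM^\ell$. Let $p_{00},p_{10}$ be probability distributions on $\mathbb N_0$; put $p_{x0}:=p_{10}$ for $x\ge1$ and $p_{xx'}:=\delta_0$ for $x'\ne0$. Let $\nu$ be a probability vector on $\mathcal S$. The HTMM is the random vector $(X_0,X'_1,X_1,Y_1,\dots,X'_T,X_T,Y_T)$ with joint law $\mathbb P(X_0=x_0,X'_t=x'_t,X_t=x_t,Y_t=y_t,1\le t\le T)=\nu_{x_0}\prod_{t=1}^T M^\ell_{x'_tx_{t-1}}M^s_{x_tx'_t}p_{x_tx'_t}(y_t)$. Inner-model parameters (independent of $t$): $\theta_1=\mathbb E[Y_t\mid X'_t=0]$, $\theta_2=q_{00}\,\mathbb E[Y_t\mid X'_t=X_t=0]/\theta_1$, $\theta_3=\mathrm{Var}[Y_t\mid X'_t=0]/\theta_1^2-1/\theta_1$. *)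

theory Defs
  imports "HOL-Probability.Probability" "Jordan_Normal_Form.Matrix"
begin

text \<open>State space S = {0..r}. Matrices indexed by S are functions nat => nat => real,
  vanishing outside S x S. Entry (x,z) = transition probability from z to x
  (column-stochastic convention).\<close>

definition Ml :: "(nat \<Rightarrow> nat \<Rightarrow> real) \<Rightarrow> nat \<Rightarrow> nat \<Rightarrow> nat \<Rightarrow> real" where
  "Ml q r x z = (if r < x \<or> r < z then 0
     else if z = 0 then (if x = 0 then 1 else 0)
     else if z = r then (if x = r then 1 else 0)
     else q x z)"

definition Ms :: "(nat \<Rightarrow> nat \<Rightarrow> real) \<Rightarrow> nat \<Rightarrow> nat \<Rightarrow> nat \<Rightarrow> real" where
  "Ms q r x z = (if r < x \<or> r < z then 0
     else if z = 0 then q x 0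
     else (if x = z then 1 else 0))"

definition Mmat :: "(nat \<Rightarrow> nat \<Rightarrow> real) \<Rightarrow> nat \<Rightarrow> real mat" where
  "Mmat q r = mat (Suc r) (Suc r) (\<lambda>(x,z). \<Sum>k\<le>r. Ms q r x k * Ml q r k z)"

definition pY :: "nat pmf \<Rightarrow> nat pmf \<Rightarrow> nat \<Rightarrow> nat \<Rightarrow> nat \<Rightarrow> real" where
  "pY p00 p10 x x' y = (if x' \<noteq> 0 then (if y = 0 then 1 else 0)
      else if x = 0 then pmf p00 y else pmf p10 y)"

text \<open>Outcomes: (x_0, [(x'_1,x_1,y_1), ..., (x'_T,x_T,y_T)]).\<close>
type_synonym outcome = "nat \<times> (nat \<times> nat \<times> nat) list"

fun path_weight :: "(nat \<Rightarrow> nat \<Rightarrow> real) \<Rightarrow> nat \<Rightarrow> nat pmf \<Rightarrow> nat pmf \<Rightarrow> nat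
     \<Rightarrow> (nat \<times> nat \<times> nat) list \<Rightarrow> real" where
  "path_weight q r p00 p10 xprev [] = 1"
| "path_weight q r p00 p10 xprev ((x', x, y) # L) =
     Ml q r x' xprev * Ms q r x x' * pY p00 p10 x x' y * path_weight q r p00 p10 x L"

definition htmm_density :: "(nat \<Rightarrow> real) \<Rightarrow> (nat \<Rightarrow> nat \<Rightarrow> real) \<Rightarrow> nat \<Rightarrow> nat \<Rightarrow> nat pmf \<Rightarrow> nat pmf
     \<Rightarrow> outcome \<Rightarrow> real" where
  "htmm_density \<nu> q r T p00 p10 \<omega> =
     (if length (snd \<omega>) = T then \<nu> (fst \<omega>) * path_weight q r p00 p10 (fst \<omega>) (snd \<omega>) else 0)"

definition htmm :: "(nat \<Rightarrow> real) \<Rightarrow> (nat \<Rightarrow> nat \<Rightarrow> real) \<Rightarrow> nat \<Rightarrow> nat \<Rightarrow> nat pmf \<Rightarrow> nat pmf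
     \<Rightarrow> outcome pmf" where
  "htmm \<nu> q r T p00 p10 = embed_pmf (htmm_density \<nu> q r T p00 p10)"

definition Yobs :: "nat \<Rightarrow> outcome \<Rightarrow> real" where
  "Yobs t \<omega> = real (snd (snd (snd \<omega> ! (t - 1))))"

definition cov :: "'a pmf \<Rightarrow> ('a \<Rightarrow> real) \<Rightarrow> ('a \<Rightarrow> real) \<Rightarrow> real" where
  "cov P X Z = measure_pmf.expectation P
      (\<lambda>w. (X w - measure_pmf.expectation P X) * (Z w - measure_pmf.expectation P Z))"

text \<open>Inner-model quantities: conditional on X'_t = 0, X_t ~ q_{.0} and Y_t ~ p_{X_t 0}.\<close>
definition pin :: "nat pmf \<Rightarrow> nat pmf \<Rightarrow> nat \<Rightarrow> nat pmf" where
  "pin p00 p10 x = (if x = 0 then p00 else p10)"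

definition pmean :: "nat pmf \<Rightarrow> real" where
  "pmean p = measure_pmf.expectation p real"

definition psecond :: "nat pmf \<Rightarrow> real" where
  "psecond p = measure_pmf.expectation p (\<lambda>y. (real y)^2)"

definition theta1 :: "(nat \<Rightarrow> nat \<Rightarrow> real) \<Rightarrow> nat \<Rightarrow> nat pmf \<Rightarrow> nat pmf \<Rightarrow> real" where
  "theta1 q r p00 p10 = (\<Sum>x\<le>r. q x 0 * pmean (pin p00 p10 x))"

definition theta2 :: "(nat \<Rightarrow> nat \<Rightarrow> real) \<Rightarrow> nat \<Rightarrow> nat pmf \<Rightarrow> nat pmf \<Rightarrow> real" where
  "theta2 q r p00 p10 = q 0 0 * pmean p00 / theta1 q r p00 p10"

definition inner_var :: "(nat \<Rightarrow> nat \<Rightarrow> real) \<Rightarrow> nat \<Rightarrow> nat pmf \<Rightarrow> nat pmf \<Rightarrow> real" where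
  "inner_var q r p00 p10 = (\<Sum>x\<le>r. q x 0 * psecond (pin p00 p10 x)) - (theta1 q r p00 p10)^2"

definition theta3 :: "(nat \<Rightarrow> nat \<Rightarrow> real) \<Rightarrow> nat \<Rightarrow> nat pmf \<Rightarrow> nat pmf \<Rightarrow> real" where
  "theta3 q r p00 p10 = inner_var q r p00 p10 / (theta1 q r p00 p10)^2 - 1 / theta1 q r p00 p10"

definition mu0 :: "(nat \<Rightarrow> nat \<Rightarrow> real) \<Rightarrow> nat \<Rightarrow> nat pmf \<Rightarrow> nat pmf \<Rightarrow> nat \<Rightarrow> real" where
  "mu0 q r p00 p10 k = theta1 q r p00 p10 / q 0 0 * (Mmat q r ^\<^sub>m k) $$ (0, 0)"

definition mgf_finite_near_0 :: "nat pmf \<Rightarrow> bool" where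
  "mgf_finite_near_0 p = (\<exists>\<epsilon>>0. \<forall>s. \<bar>s\<bar> < \<epsilon> \<longrightarrow> integrable (measure_pmf p) (\<lambda>y. exp (s * real y)))"

definition diagonalizable :: "real mat \<Rightarrow> bool" where
  "diagonalizable A = (\<exists>D. diagonal_mat D \<and> similar_mat (map_mat complex_of_real A) D)"

end

theory Submission
  imports Defs
begin


lemma nn_count_finite_supp:
  assumes "finite A" "\<And>x. x \<notin> A \<Longrightarrow> f x = 0"
  shows "(\<integral>\<^sup>+x. f x \<partial>count_space UNIV) = (\<Sum>x\<in>A. f x)"
proof -
  have "(\<integral>\<^sup>+x. f x \<partial>count_space UNIV) = (\<integral>\<^sup>+x. f x * indicator A x \<partial>count_space UNIV)"
    by (rule nn_integral_cong) (auto simp: assms(2) split: split_indicator)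
  also have "\<dots> = (\<integral>\<^sup>+x. f x \<partial>count_space A)"
    by (simp add: nn_integral_count_space_indicator)
  also have "\<dots> = (\<Sum>x\<in>A. f x)" using assms(1) by (simp add: nn_integral_count_space_finite)
  finally show ?thesis .
qed

lemma sum_mult_delta:
  fixes f :: "'a \<Rightarrow> 'b::comm_semiring_1"
  assumes "finite S" "b \<in> S"
  shows "(\<Sum>x\<in>S. f x * (if x = b then v else 0)) = f b * v"
proof -
  have "(\<Sum>x\<in>S. f x * (if x = b then v else 0)) = (\<Sum>x\<in>S. if x = b then f x * v else 0)"
    by (rule sum.cong) auto
  then show ?thesis using assms by simp
qed

definition colL :: "(nat \<Rightarrow> nat \<Rightarrow> real) \<Rightarrow> nat \<Rightarrow> nat \<Rightarrow> nat pmf" where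
  "colL q r z = (if z \<le> r then embed_pmf (\<lambda>x. Ml q r x z) else return_pmf 0)"
definition colS :: "(nat \<Rightarrow> nat \<Rightarrow> real) \<Rightarrow> nat \<Rightarrow> nat \<Rightarrow> nat pmf" where
  "colS q r z = (if z \<le> r then embed_pmf (\<lambda>x. Ms q r x z) else return_pmf 0)"
definition emis :: "nat pmf \<Rightarrow> nat pmf \<Rightarrow> nat \<Rightarrow> nat \<Rightarrow> nat pmf" where
  "emis p00 p10 b a = (if a \<noteq> 0 then return_pmf 0 else pin p00 p10 b)"
definition stepp :: "(nat \<Rightarrow> nat \<Rightarrow> real) \<Rightarrow> nat \<Rightarrow> nat pmf \<Rightarrow> nat pmf \<Rightarrow> nat \<Rightarrow> (nat \<times> nat \<times> nat) pmf" where
  "stepp q r p00 p10 x = colL q r x \<bind> (\<lambda>a. colS q r a \<bind> (\<lambda>b. map_pmf (\<lambda>c. (a,b,c)) (emis p00 p10 b a)))"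
primrec chain :: "(nat \<Rightarrow> nat \<Rightarrow> real) \<Rightarrow> nat \<Rightarrow> nat pmf \<Rightarrow> nat pmf \<Rightarrow> nat \<Rightarrow> nat \<Rightarrow> (nat \<times> nat \<times> nat) list pmf" where
  "chain q r p00 p10 0 x = return_pmf []"
| "chain q r p00 p10 (Suc n) x = stepp q r p00 p10 x \<bind> (\<lambda>s. map_pmf ((#) s) (chain q r p00 p10 n (fst (snd s))))"

locale hloc =
  fixes r :: nat and q :: "nat \<Rightarrow> nat \<Rightarrow> real" and p00 p10 :: "nat pmf"
  assumes r: "r \<ge> 1"
    and q_range: "\<forall>x\<le>r. \<forall>z<r. 0 \<le> q x z \<and> q x z \<le> 1"
    and q_stoch: "\<forall>z<r. (\<Sum>x\<le>r. q x z) = 1"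
begin

lemma Ml_nonneg: "0 \<le> Ml q r x z"
  using q_range by (auto simp: Ml_def)
lemma Ms_nonneg: "0 \<le> Ms q r x z"
  using q_range r by (auto simp: Ms_def)
lemma Ml_out: "x > r \<Longrightarrow> Ml q r x z = 0" by (simp add: Ml_def)
lemma Ms_out: "x > r \<Longrightarrow> Ms q r x z = 0" by (simp add: Ms_def)

lemma Ml_sum: "z \<le> r \<Longrightarrow> (\<Sum>x\<le>r. Ml q r x z) = 1"
proof -
  assume z: "z \<le> r"
  show ?thesis
  proof (cases "z = 0 \<or> z = r")
    case True
    then have "(\<Sum>x\<le>r. Ml q r x z) = (\<Sum>x\<le>r. if x = z then 1 else 0)"
      using r z by (intro sum.cong) (auto simp: Ml_def)
    then show ?thesis using z by simp
  next
    case False then have "z < r" "z \<noteq> 0" using z by auto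
    then show ?thesis using q_stoch by (auto simp: Ml_def)
  qed
qed

lemma Ms_sum: "z \<le> r \<Longrightarrow> (\<Sum>x\<le>r. Ms q r x z) = 1"
proof -
  assume z: "z \<le> r"
  show ?thesis
  proof (cases "z = 0")
    case True then show ?thesis using q_stoch r by (auto simp: Ms_def)
  next
    case False then show ?thesis using z by (auto simp: Ms_def if_distrib sum.delta cong: if_cong)
  qed
qed

lemma pmf_colL: "z \<le> r \<Longrightarrow> pmf (colL q r z) x = Ml q r x z"
  unfolding colL_def
  apply simp
  apply (rule pmf_embed_pmf)
   apply (rule Ml_nonneg)
  apply (subst nn_count_finite_supp[of "{..r}"])
  using Ml_sum[of z] Ml_nonneg by (auto simp: Ml_out sum_ennreal)

lemma pmf_colS: "z \<le> r \<Longrightarrow> pmf (colS q r z) x = Ms q r x z"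
  unfolding colS_def
  apply simp
  apply (rule pmf_embed_pmf)
   apply (rule Ms_nonneg)
  apply (subst nn_count_finite_supp[of "{..r}"])
  using Ms_sum[of z] Ms_nonneg by (auto simp: Ms_out sum_ennreal)

lemma set_colL: "z \<le> r \<Longrightarrow> set_pmf (colL q r z) \<subseteq> {..r}"
  by (auto simp: set_pmf_iff pmf_colL) (metis Ml_out not_le)
lemma set_colS: "z \<le> r \<Longrightarrow> set_pmf (colS q r z) \<subseteq> {..r}"
  by (auto simp: set_pmf_iff pmf_colS) (metis Ms_out not_le)

lemma nn_colL: "z \<le> r \<Longrightarrow> (\<integral>\<^sup>+a. f a \<partial>colL q r z) = (\<Sum>a\<le>r. ennreal (Ml q r a z) * f a)"
  apply (subst nn_integral_measure_pmf_support[of "{..r}"])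
  using set_colL by (auto simp: pmf_colL mult.commute)
lemma nn_colS: "z \<le> r \<Longrightarrow> (\<integral>\<^sup>+a. f a \<partial>colS q r z) = (\<Sum>a\<le>r. ennreal (Ms q r a z) * f a)"
  apply (subst nn_integral_measure_pmf_support[of "{..r}"])
  using set_colS by (auto simp: pmf_colS mult.commute)

lemma nn_step: "x \<le> r \<Longrightarrow> (\<integral>\<^sup>+s. H s \<partial>stepp q r p00 p10 x) =
   (\<Sum>a\<le>r. \<Sum>b\<le>r. ennreal (Ml q r a x) * ennreal (Ms q r b a) * (\<integral>\<^sup>+c. H (a,b,c) \<partial>emis p00 p10 b a))"
  unfolding stepp_def
  by (simp add: nn_integral_bind_pmf nn_integral_map_pmf nn_colL nn_colS sum_distrib_left mult.assoc)

lemma set_step: "x \<le> r \<Longrightarrow> s \<in> set_pmf (stepp q r p00 p10 x) \<Longrightarrow> fst (snd s) \<le> r \<and> fst s \<le> r"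
  unfolding stepp_def using set_colL set_colS by fastforce

lemma pmf_emis: "pmf (emis p00 p10 b a) c = pY p00 p10 b a c"
  by (auto simp: emis_def pY_def pin_def pmf_return)

lemma pmf_step: assumes x: "x \<le> r"
  shows "pmf (stepp q r p00 p10 x) (a,b,c) = Ml q r a x * Ms q r b a * pY p00 p10 b a c"
proof -
  have e: "ennreal (pmf (stepp q r p00 p10 x) (a,b,c)) = (\<integral>\<^sup>+s. indicator {(a,b,c)} s \<partial>stepp q r p00 p10 x)"
    by (simp add: emeasure_pmf_single)
  have inner: "(\<integral>\<^sup>+c'. indicator {(a,b,c)} (a',b',c') \<partial>emis p00 p10 b' a') =
      (if a' = a \<and> b' = b then ennreal (pY p00 p10 b a c) else 0)" for a' b'
  proof (cases "a' = a \<and> b' = b")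
    case True
    then have [simp]: "a' = a" "b' = b" by auto
    have "(\<integral>\<^sup>+c'. indicator {(a,b,c)} (a,b,c') \<partial>emis p00 p10 b a) = (\<integral>\<^sup>+c'. indicator {c} c' \<partial>emis p00 p10 b a)"
      by (intro nn_integral_cong) (auto split: split_indicator)
    then show ?thesis by (simp add: emeasure_pmf_single pmf_emis)
  qed (auto split: split_indicator)
  have "(\<integral>\<^sup>+s. indicator {(a,b,c)} s \<partial>stepp q r p00 p10 x) =
     (\<Sum>a'\<le>r. \<Sum>b'\<le>r. ennreal (Ml q r a' x) * ennreal (Ms q r b' a') * (if a' = a \<and> b' = b then ennreal (pY p00 p10 b a c) else 0))"
    by (subst nn_step[OF x]) (simp add: inner)
  also have "\<dots> = ennreal (Ml q r a x * Ms q r b a * pY p00 p10 b a c)"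
  proof (cases "a \<le> r \<and> b \<le> r")
    case True
    have ia: "\<And>v::ennreal. (if a' = a \<and> b' = b then v else 0) = (if a' = a then (if b' = b then v else 0) else 0)" for a' b' by simp
    have "(\<Sum>a'\<le>r. \<Sum>b'\<le>r. ennreal (Ml q r a' x) * ennreal (Ms q r b' a') * (if a' = a \<and> b' = b then ennreal (pY p00 p10 b a c) else 0))
      = (\<Sum>a'\<le>r. if a' = a then (\<Sum>b'\<le>r. if b' = b then ennreal (Ml q r a x) * ennreal (Ms q r b a) * ennreal (pY p00 p10 b a c) else 0) else 0)"
      by (intro sum.cong refl) (auto intro!: sum.cong simp: sum_mult_delta)
    also have "\<dots> = ennreal (Ml q r a x) * ennreal (Ms q r b a) * ennreal (pY p00 p10 b a c)"
      using True by (simp add: sum.delta)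
    finally show ?thesis
      by (simp add: ennreal_mult Ml_nonneg Ms_nonneg pY_def)
  next
    case False
    then have "Ml q r a x * Ms q r b a = 0" using Ml_out Ms_out by force
    then show ?thesis using False by (auto simp: if_distrib sum.delta cong: if_cong)
  qed
  finally show ?thesis using e by (simp add: Ml_nonneg Ms_nonneg pY_def)
qed

lemma set_chain: "L \<in> set_pmf (chain q r p00 p10 n x) \<Longrightarrow> length L = n"
  by (induction n arbitrary: x L) auto

lemma pmf_chain: "x \<le> r \<Longrightarrow> pmf (chain q r p00 p10 n x) L = (if length L = n then path_weight q r p00 p10 x L else 0)"
proof (induction n arbitrary: x L)
  case 0 then show ?case by (auto simp: pmf_return)
next
  case (Suc n)
  show ?case
  proof (cases L)
    case Nil
    have "\<And>s. pmf (map_pmf ((#) s) (chain q r p00 p10 n (fst (snd s)))) [] = 0"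
      by (rule pmf_map_outside) auto
    then show ?thesis using Nil by (simp add: pmf_bind)
  next
    case (Cons s0 L')
    obtain a b c where s0: "s0 = (a,b,c)" by (cases s0) auto
    have "pmf (chain q r p00 p10 (Suc n) x) L = measure_pmf.expectation (stepp q r p00 p10 x)
       (\<lambda>s. if s = s0 then pmf (chain q r p00 p10 n (fst (snd s0))) L' else 0)"
      unfolding Cons chain.simps pmf_bind
      apply (rule Bochner_Integration.integral_cong, simp)
      subgoal for s
        apply (cases "s = s0")
         apply (simp add: pmf_map_inj')
        apply (subst pmf_map_outside) apply auto
        done
      done
    also have "\<dots> = pmf (chain q r p00 p10 n (fst (snd s0))) L' * pmf (stepp q r p00 p10 x) s0"
      by (subst integral_measure_pmf_real[of "{s0}"]) (auto split: if_splits)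
    also have "\<dots> = (if length L = Suc n then path_weight q r p00 p10 x L else 0)"
    proof (cases "b \<le> r")
      case True
      then show ?thesis using Suc by (auto simp: Cons s0 pmf_step)
    next
      case False
      then show ?thesis using Suc by (auto simp: Cons s0 pmf_step Ms_out)
    qed
    finally show ?thesis .
  qed
qed

end


definition Mf :: "(nat \<Rightarrow> nat \<Rightarrow> real) \<Rightarrow> nat \<Rightarrow> nat \<Rightarrow> nat \<Rightarrow> real" where
  "Mf q r x z = (\<Sum>k\<le>r. Ms q r x k * Ml q r k z)"

primrec Mp :: "(nat \<Rightarrow> nat \<Rightarrow> real) \<Rightarrow> nat \<Rightarrow> nat \<Rightarrow> nat \<Rightarrow> nat \<Rightarrow> real" where
  "Mp q r 0 a b = (if a = b then 1 else 0)"
| "Mp q r (Suc i) a b = (\<Sum>k\<le>r. Mp q r i a k * Mf q r k b)"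

definition htmm2 where
  "htmm2 \<nu> q r T p00 p10 = embed_pmf \<nu> \<bind> (\<lambda>x0. map_pmf (Pair x0) (chain q r p00 p10 T x0))"

context hloc begin

lemma Mf_nonneg: "0 \<le> Mf q r x z"
  unfolding Mf_def by (intro sum_nonneg mult_nonneg_nonneg Ms_nonneg Ml_nonneg)

lemma Mp_nonneg: "0 \<le> Mp q r i a b"
  by (induction i arbitrary: b) (auto intro!: sum_nonneg mult_nonneg_nonneg Mf_nonneg)

lemma step_const: "x \<le> r \<Longrightarrow> (\<integral>\<^sup>+s. G (fst (snd s)) \<partial>stepp q r p00 p10 x) = (\<Sum>b\<le>r. ennreal (Mf q r b x) * G b)"
proof -
  assume x: "x \<le> r"
  have "(\<integral>\<^sup>+s. G (fst (snd s)) \<partial>stepp q r p00 p10 x) = (\<Sum>a\<le>r. \<Sum>b\<le>r. ennreal (Ml q r a x) * ennreal (Ms q r b a) * G b)"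
    by (subst nn_step[OF x]) (simp add: measure_pmf.emeasure_space_1)
  also have "\<dots> = (\<Sum>b\<le>r. \<Sum>a\<le>r. ennreal (Ms q r b a * Ml q r a x) * G b)"
    by (subst sum.swap) (simp add: ennreal_mult Ml_nonneg Ms_nonneg mult.commute)
  also have "\<dots> = (\<Sum>b\<le>r. ennreal (Mf q r b x) * G b)"
    by (simp add: Mf_def sum_distrib_right[symmetric] sum_ennreal Ml_nonneg Ms_nonneg)
  finally show ?thesis .
qed

lemma markov: "x \<le> r \<Longrightarrow> i \<le> n \<Longrightarrow>
  (\<integral>\<^sup>+L. F (drop i L) \<partial>chain q r p00 p10 n x) = (\<Sum>x1\<le>r. ennreal (Mp q r i x1 x) * (\<integral>\<^sup>+L. F L \<partial>chain q r p00 p10 (n - i) x1))"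
proof (induction i arbitrary: n x)
  case 0
  have "(\<Sum>x1\<le>r. ennreal (Mp q r 0 x1 x) * G x1) = (\<Sum>x1\<le>r. if x1 = x then G x1 else 0)" for G
    by (rule sum.cong) auto
  then show ?case using 0 by simp
next
  case (Suc i)
  then obtain m where n: "n = Suc m" and im: "i \<le> m" by (cases n) auto
  have "(\<integral>\<^sup>+L. F (drop (Suc i) L) \<partial>chain q r p00 p10 n x) =
     (\<integral>\<^sup>+s. (\<integral>\<^sup>+L. F (drop i L) \<partial>chain q r p00 p10 m (fst (snd s))) \<partial>stepp q r p00 p10 x)"
    by (simp add: n nn_integral_bind_pmf nn_integral_map_pmf)
  also have "\<dots> = (\<integral>\<^sup>+s. (\<Sum>x1\<le>r. ennreal (Mp q r i x1 (fst (snd s))) * (\<integral>\<^sup>+L. F L \<partial>chain q r p00 p10 (m - i) x1)) \<partial>stepp q r p00 p10 x)"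
    apply (rule nn_integral_cong_AE)
    apply (rule AE_pmfI)
    using Suc.IH[OF _ im] set_step[OF Suc.prems(1)] by auto
  also have "\<dots> = (\<Sum>b\<le>r. ennreal (Mf q r b x) * (\<Sum>x1\<le>r. ennreal (Mp q r i x1 b) * (\<integral>\<^sup>+L. F L \<partial>chain q r p00 p10 (m - i) x1)))"
    by (rule step_const[OF Suc.prems(1)])
  also have "\<dots> = (\<Sum>x1\<le>r. (\<Sum>b\<le>r. ennreal (Mp q r i x1 b * Mf q r b x)) * (\<integral>\<^sup>+L. F L \<partial>chain q r p00 p10 (m - i) x1))"
    apply (simp add: sum_distrib_left)
    apply (subst sum.swap)
    apply (simp add: sum_distrib_right ennreal_mult Mp_nonneg Mf_nonneg mult.assoc mult.left_commute)
    done
  also have "\<dots> = (\<Sum>x1\<le>r. ennreal (Mp q r (Suc i) x1 x) * (\<integral>\<^sup>+L. F L \<partial>chain q r p00 p10 (n - Suc i) x1))"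
    by (simp add: n sum_ennreal Mp_nonneg Mf_nonneg)
  finally show ?case .
qed

lemma chain_prob: "(\<integral>\<^sup>+L. 1 \<partial>chain q r p00 p10 n x) = 1"
  by (simp add: measure_pmf.emeasure_space_1)

lemma head: "(\<integral>\<^sup>+L. H (hd L) * K (tl L) \<partial>chain q r p00 p10 (Suc m) x) =
   (\<integral>\<^sup>+s. H s * (\<integral>\<^sup>+L. K L \<partial>chain q r p00 p10 m (fst (snd s))) \<partial>stepp q r p00 p10 x)"
  by (simp add: nn_integral_bind_pmf nn_integral_map_pmf nn_integral_cmult)

end

locale hloc2 = hloc +
  fixes \<nu> :: "nat \<Rightarrow> real" and T :: nat
  assumes nu_nonneg: "\<forall>x\<le>r. 0 \<le> \<nu> x" and nu_supp: "\<forall>x>r. \<nu> x = 0"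
    and nu_sum: "(\<Sum>x\<le>r. \<nu> x) = 1"
begin

lemma nu_nn: "0 \<le> \<nu> x"
  using nu_nonneg nu_supp by (cases "x \<le> r") auto

lemma pmf_nu: "pmf (embed_pmf \<nu>) x = \<nu> x"
  apply (rule pmf_embed_pmf[OF nu_nn])
  apply (subst nn_count_finite_supp[of "{..r}"])
  using nu_supp nu_sum nu_nn by (auto simp: sum_ennreal)

lemma set_nu: "set_pmf (embed_pmf \<nu>) \<subseteq> {..r}"
  using nu_supp by (auto simp: set_pmf_iff pmf_nu) (metis not_le)

lemma pmf_htmm2: "pmf (htmm2 \<nu> q r T p00 p10) (x0, L) = htmm_density \<nu> q r T p00 p10 (x0, L)"
proof -
  have "pmf (htmm2 \<nu> q r T p00 p10) (x0, L) = measure_pmf.expectation (embed_pmf \<nu>)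
     (\<lambda>x. if x = x0 then pmf (chain q r p00 p10 T x0) L else 0)"
    unfolding htmm2_def pmf_bind
    apply (rule Bochner_Integration.integral_cong, simp)
    subgoal for x
    proof (cases "x = x0")
      case True
      have inj: "inj (Pair x0)" by (simp add: inj_def)
      show ?thesis using pmf_map_inj'[OF inj, of "chain q r p00 p10 T x0" L] True by simp
    next
      case False
      have "pmf (map_pmf (Pair x) (chain q r p00 p10 T x)) (x0, L) = 0"
        by (rule pmf_map_outside) (use False in auto)
      then show ?thesis using False by simp
    qed
    done
  also have "\<dots> = pmf (chain q r p00 p10 T x0) L * \<nu> x0"
    by (subst integral_measure_pmf_real[of "{x0}"]) (auto split: if_splits simp: pmf_nu)
  also have "\<dots> = htmm_density \<nu> q r T p00 p10 (x0, L)"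
    using nu_supp by (cases "x0 \<le> r") (auto simp: pmf_chain htmm_density_def)
  finally show ?thesis .
qed

lemma htmm_eq: "htmm \<nu> q r T p00 p10 = htmm2 \<nu> q r T p00 p10"
proof -
  have "htmm_density \<nu> q r T p00 p10 = pmf (htmm2 \<nu> q r T p00 p10)"
    by (rule ext) (metis pmf_htmm2 prod.collapse)
  then show ?thesis unfolding htmm_def
    by (simp add: type_definition.Rep_inverse[OF td_pmf_embed_pmf])
qed

lemma nn_htmm: "(\<integral>\<^sup>+w. F (snd w) \<partial>htmm \<nu> q r T p00 p10) = (\<Sum>x0\<le>r. ennreal (\<nu> x0) * (\<integral>\<^sup>+L. F L \<partial>chain q r p00 p10 T x0))"
  unfolding htmm_eq htmm2_def
  apply (simp add: nn_integral_bind_pmf nn_integral_map_pmf)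
  apply (subst nn_integral_measure_pmf_support[of "{..r}"])
  using set_nu by (auto simp: pmf_nu mult.commute)

end


context hloc begin

lemma q0_nonneg: "b \<le> r \<Longrightarrow> 0 \<le> q b 0"
  using q_range r by auto

lemma Ms0: "b \<le> r \<Longrightarrow> Ms q r b 0 = q b 0"
  by (simp add: Ms_def)

lemma step_y:
  fixes h :: "nat \<Rightarrow> real" and G :: "nat \<Rightarrow> real"
  assumes x: "x \<le> r" and G: "\<And>b. 0 \<le> G b" and h0: "h 0 = 0" and hnn: "\<And>y. 0 \<le> h y"
    and mh: "\<And>b. (\<integral>\<^sup>+c. ennreal (h c) \<partial>pin p00 p10 b) = ennreal (mh b)" and mhnn: "\<And>b. 0 \<le> mh b"
  shows "(\<integral>\<^sup>+s. ennreal (h (snd (snd s))) * ennreal (G (fst (snd s))) \<partial>stepp q r p00 p10 x)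
      = ennreal (Ml q r 0 x * (\<Sum>b\<le>r. q b 0 * mh b * G b))"
proof -
  have inner: "ennreal (Ml q r a x) * ennreal (Ms q r b a) * (\<integral>\<^sup>+c. ennreal (h c) * ennreal (G b) \<partial>emis p00 p10 b a)
     = (if a = 0 then ennreal (Ml q r 0 x * (q b 0 * mh b * G b)) else 0)" if b: "b \<le> r" for a b
  proof (cases "a = 0")
    case True
    have "(\<integral>\<^sup>+c. ennreal (h c) * ennreal (G b) \<partial>emis p00 p10 b a) = ennreal (mh b) * ennreal (G b)"
      using True by (simp add: emis_def nn_integral_multc mh)
    then show ?thesis using True b
      by (simp add: Ms0 ennreal_mult Ml_nonneg q0_nonneg mhnn G mult.assoc)
  next
    case False
    then show ?thesis by (simp add: emis_def h0)
  qed
  have "(\<integral>\<^sup>+s. ennreal (h (snd (snd s))) * ennreal (G (fst (snd s))) \<partial>stepp q r p00 p10 x)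
     = (\<Sum>a\<le>r. \<Sum>b\<le>r. (if a = 0 then ennreal (Ml q r 0 x * (q b 0 * mh b * G b)) else 0))"
    by (subst nn_step[OF x]) (intro sum.cong refl, simp add: inner)
  also have "\<dots> = (\<Sum>b\<le>r. ennreal (Ml q r 0 x * (q b 0 * mh b * G b)))"
    by (subst sum.swap) (simp add: sum.delta)
  also have "\<dots> = ennreal (Ml q r 0 x * (\<Sum>b\<le>r. q b 0 * mh b * G b))"
    by (subst sum_ennreal) (auto intro!: mult_nonneg_nonneg Ml_nonneg q0_nonneg mhnn G simp: sum_distrib_left)
  finally show ?thesis .
qed

lemma single_chain:
  fixes h :: "nat \<Rightarrow> real"
  assumes x: "x \<le> r" and j: "j < n" and h0: "h 0 = 0" and hnn: "\<And>y. 0 \<le> h y"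
    and mh: "\<And>b. (\<integral>\<^sup>+c. ennreal (h c) \<partial>pin p00 p10 b) = ennreal (mh b)" and mhnn: "\<And>b. 0 \<le> mh b"
  shows "(\<integral>\<^sup>+L. ennreal (h (snd (snd (L ! j)))) \<partial>chain q r p00 p10 n x)
      = ennreal (\<Sum>x1\<le>r. Mp q r j x1 x * Ml q r 0 x1 * (\<Sum>b\<le>r. q b 0 * mh b))"
proof -
  define C where "C = (\<Sum>b\<le>r. q b 0 * mh b)"
  have Cnn: "0 \<le> C" unfolding C_def by (auto intro!: sum_nonneg mult_nonneg_nonneg q0_nonneg mhnn)
  have "(\<integral>\<^sup>+L. ennreal (h (snd (snd (L ! j)))) \<partial>chain q r p00 p10 n x)
     = (\<integral>\<^sup>+L. (\<lambda>L'. ennreal (h (snd (snd (hd L')))) * 1) (drop j L) \<partial>chain q r p00 p10 n x)"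
    apply (rule nn_integral_cong_AE, rule AE_pmfI)
    using set_chain j by (auto simp: hd_drop_conv_nth)
  also have "\<dots> = (\<Sum>x1\<le>r. ennreal (Mp q r j x1 x) * (\<integral>\<^sup>+L. ennreal (h (snd (snd (hd L)))) * 1 \<partial>chain q r p00 p10 (Suc (n - j - 1)) x1))"
    using markov[OF x, of j n] j by (simp add: Suc_diff_Suc)
  also have "\<dots> = (\<Sum>x1\<le>r. ennreal (Mp q r j x1 x) * ennreal (Ml q r 0 x1 * C))"
  proof (intro sum.cong refl arg_cong2[where f="(*)"])
    fix x1 assume x1: "x1 \<in> {..r}"
    have "(\<integral>\<^sup>+L. ennreal (h (snd (snd (hd L)))) * 1 \<partial>chain q r p00 p10 (Suc (n - j - 1)) x1)
       = (\<integral>\<^sup>+s. ennreal (h (snd (snd s))) * ennreal ((\<lambda>_. 1) (fst (snd s))) \<partial>stepp q r p00 p10 x1)"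
      using head[where H="\<lambda>s. ennreal (h (snd (snd s)))" and K="\<lambda>_. 1"] by (simp add: chain_prob)
    also have "\<dots> = ennreal (Ml q r 0 x1 * C)"
      using step_y[of x1 "\<lambda>_. 1" h mh] x1 h0 hnn mh mhnn by (simp add: C_def)
    finally show "(\<integral>\<^sup>+L. ennreal (h (snd (snd (hd L)))) * 1 \<partial>chain q r p00 p10 (Suc (n - j - 1)) x1) = ennreal (Ml q r 0 x1 * C)" .
  qed
  also have "\<dots> = ennreal (\<Sum>x1\<le>r. Mp q r j x1 x * Ml q r 0 x1 * C)"
    by (subst sum_ennreal[symmetric]) (auto simp: ennreal_mult Mp_nonneg Ml_nonneg Cnn mult.assoc intro!: mult_nonneg_nonneg)
  finally show ?thesis by (simp add: C_def)
qed

end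


locale hloc3 = hloc +
  assumes int1: "\<And>b. integrable (measure_pmf (pin p00 p10 b)) (\<lambda>y. real y)"
    and int2: "\<And>b. integrable (measure_pmf (pin p00 p10 b)) (\<lambda>y. (real y)^2)"
begin

lemma mom1: "(\<integral>\<^sup>+c. ennreal (real c) \<partial>pin p00 p10 b) = ennreal (pmean (pin p00 p10 b))"
  unfolding pmean_def by (rule nn_integral_eq_integral[OF int1]) auto
lemma mom2: "(\<integral>\<^sup>+c. ennreal ((real c)^2) \<partial>pin p00 p10 b) = ennreal (psecond (pin p00 p10 b))"
  unfolding psecond_def by (rule nn_integral_eq_integral[OF int2]) auto
lemma mom1_nn: "0 \<le> pmean (pin p00 p10 b)"
  unfolding pmean_def by simp
lemma mom2_nn: "0 \<le> psecond (pin p00 p10 b)"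
  unfolding psecond_def by simp

lemma single1: "x \<le> r \<Longrightarrow> j < n \<Longrightarrow> (\<integral>\<^sup>+L. ennreal (real (snd (snd (L ! j)))) \<partial>chain q r p00 p10 n x)
      = ennreal (\<Sum>x1\<le>r. Mp q r j x1 x * Ml q r 0 x1 * theta1 q r p00 p10)"
  using single_chain[of x j n "\<lambda>c. real c" "\<lambda>b. pmean (pin p00 p10 b)"] mom1 mom1_nn
  by (simp add: theta1_def)

lemma single2: "x \<le> r \<Longrightarrow> j < n \<Longrightarrow> (\<integral>\<^sup>+L. ennreal ((real (snd (snd (L ! j))))^2) \<partial>chain q r p00 p10 n x)
      = ennreal (\<Sum>x1\<le>r. Mp q r j x1 x * Ml q r 0 x1 * (\<Sum>b\<le>r. q b 0 * psecond (pin p00 p10 b)))"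
  using single_chain[of x j n "\<lambda>c. (real c)^2" "\<lambda>b. psecond (pin p00 p10 b)"] mom2 mom2_nn
  by simp

definition Gf where "Gf k b = (\<Sum>x2\<le>r. Mp q r k x2 b * Ml q r 0 x2 * theta1 q r p00 p10)"
definition Df where "Df k = (\<Sum>b\<le>r. q b 0 * pmean (pin p00 p10 b) * Gf k b)"

lemma theta1_nn: "0 \<le> theta1 q r p00 p10"
  unfolding theta1_def by (auto intro!: sum_nonneg mult_nonneg_nonneg q0_nonneg mom1_nn)

lemma Gf_nn: "0 \<le> Gf k b"
  unfolding Gf_def by (auto intro!: sum_nonneg mult_nonneg_nonneg Mp_nonneg Ml_nonneg theta1_nn)

lemma Df_nn: "0 \<le> Df k"
  unfolding Df_def by (auto intro!: sum_nonneg mult_nonneg_nonneg q0_nonneg mom1_nn Gf_nn)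

lemma pair_chain:
  assumes x: "x \<le> r" and ij: "i < j" and jn: "j < n"
  shows "(\<integral>\<^sup>+L. ennreal (real (snd (snd (L ! i)))) * ennreal (real (snd (snd (L ! j)))) \<partial>chain q r p00 p10 n x)
      = ennreal (\<Sum>x1\<le>r. Mp q r i x1 x * Ml q r 0 x1 * Df (j - i - 1))"
proof -
  let ?F = "\<lambda>L'. ennreal (real (snd (snd (hd L')))) * ennreal (real (snd (snd (tl L' ! (j - i - 1)))))"
  have "(\<integral>\<^sup>+L. ennreal (real (snd (snd (L ! i)))) * ennreal (real (snd (snd (L ! j)))) \<partial>chain q r p00 p10 n x)
     = (\<integral>\<^sup>+L. ?F (drop i L) \<partial>chain q r p00 p10 n x)"
    apply (rule nn_integral_cong_AE, rule AE_pmfI)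
    subgoal for L
      using set_chain[of L n x] ij jn by (auto simp: hd_drop_conv_nth tl_drop drop_Suc[symmetric] nth_drop)
    done
  also have "\<dots> = (\<Sum>x1\<le>r. ennreal (Mp q r i x1 x) * (\<integral>\<^sup>+L. ?F L \<partial>chain q r p00 p10 (Suc (n - i - 1)) x1))"
    using markov[OF x, of i n "?F"] ij jn by (simp add: Suc_diff_Suc)
  also have "\<dots> = (\<Sum>x1\<le>r. ennreal (Mp q r i x1 x) * ennreal (Ml q r 0 x1 * Df (j - i - 1)))"
  proof (intro sum.cong refl arg_cong2[where f="(*)"])
    fix x1 assume x1: "x1 \<in> {..r}"
    have "(\<integral>\<^sup>+L. ?F L \<partial>chain q r p00 p10 (Suc (n - i - 1)) x1)
       = (\<integral>\<^sup>+s. ennreal (real (snd (snd s))) * (\<integral>\<^sup>+L. ennreal (real (snd (snd (L ! (j - i - 1))))) \<partial>chain q r p00 p10 (n - i - 1) (fst (snd s))) \<partial>stepp q r p00 p10 x1)"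
      using head[where H="\<lambda>s. ennreal (real (snd (snd s)))" and K="\<lambda>L. ennreal (real (snd (snd (L ! (j - i - 1)))))"] by simp
    also have "\<dots> = (\<integral>\<^sup>+s. ennreal (real (snd (snd s))) * ennreal (Gf (j - i - 1) (fst (snd s))) \<partial>stepp q r p00 p10 x1)"
      apply (rule nn_integral_cong_AE, rule AE_pmfI)
      using set_step[of x1] x1 single1 ij jn by (auto simp: Gf_def)
    also have "\<dots> = ennreal (Ml q r 0 x1 * Df (j - i - 1))"
      using step_y[of x1 "Gf (j - i - 1)" "\<lambda>c. real c" "\<lambda>b. pmean (pin p00 p10 b)"] x1 mom1 mom1_nn Gf_nn
      by (simp add: Df_def)
    finally show "(\<integral>\<^sup>+L. ?F L \<partial>chain q r p00 p10 (Suc (n - i - 1)) x1) = ennreal (Ml q r 0 x1 * Df (j - i - 1))" .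
  qed
  also have "\<dots> = ennreal (\<Sum>x1\<le>r. Mp q r i x1 x * Ml q r 0 x1 * Df (j - i - 1))"
    by (subst sum_ennreal[symmetric]) (auto simp: ennreal_mult Mp_nonneg Ml_nonneg Df_nn mult.assoc intro!: mult_nonneg_nonneg)
  finally show ?thesis .
qed

end


locale hloc4 = hloc2 + hloc3
begin

definition pit where "pit t = (\<Sum>x0\<le>r. \<nu> x0 * (\<Sum>x1\<le>r. Mp q r (t - 1) x1 x0 * Ml q r 0 x1))"

abbreviation "PP \<equiv> htmm \<nu> q r T p00 p10"

lemma top: "(\<And>x0. x0 \<le> r \<Longrightarrow> (\<integral>\<^sup>+L. F L \<partial>chain q r p00 p10 T x0) = ennreal (g x0)) \<Longrightarrow> (\<And>x0. 0 \<le> g x0) \<Longrightarrow>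
   (\<integral>\<^sup>+w. F (snd w) \<partial>PP) = ennreal (\<Sum>x0\<le>r. \<nu> x0 * g x0)"
  by (simp add: nn_htmm ennreal_mult nu_nn sum_ennreal[symmetric] mult_nonneg_nonneg)

lemma real_of: "(\<integral>\<^sup>+w. ennreal (f w) \<partial>PP) = ennreal v \<Longrightarrow> (\<And>w. 0 \<le> f w) \<Longrightarrow> 0 \<le> v \<Longrightarrow>
   integrable PP f \<and> measure_pmf.expectation PP f = v"
  by (subst nn_integral_eq_integrable[symmetric]) auto

lemma EY: assumes "1 \<le> t" "t \<le> T"
  shows "integrable PP (Yobs t) \<and> measure_pmf.expectation PP (Yobs t) = pit t * theta1 q r p00 p10"
proof (rule real_of)
  have "(\<integral>\<^sup>+w. ennreal (Yobs t w) \<partial>PP) = (\<integral>\<^sup>+w. (\<lambda>L. ennreal (real (snd (snd (L ! (t - 1)))))) (snd w) \<partial>PP)"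
    by (simp add: Yobs_def)
  also have "\<dots> = ennreal (\<Sum>x0\<le>r. \<nu> x0 * (\<Sum>x1\<le>r. Mp q r (t - 1) x1 x0 * Ml q r 0 x1 * theta1 q r p00 p10))"
    apply (rule top)
    using single1 assms by (auto intro!: sum_nonneg mult_nonneg_nonneg Mp_nonneg Ml_nonneg theta1_nn)
  also have "\<dots> = ennreal (pit t * theta1 q r p00 p10)"
    by (simp add: pit_def sum_distrib_right mult.assoc)
  finally show "(\<integral>\<^sup>+w. ennreal (Yobs t w) \<partial>PP) = ennreal (pit t * theta1 q r p00 p10)" .
  show "0 \<le> Yobs t w" for w by (simp add: Yobs_def)
  show "0 \<le> pit t * theta1 q r p00 p10"
    by (auto simp: pit_def intro!: sum_nonneg mult_nonneg_nonneg Mp_nonneg Ml_nonneg theta1_nn nu_nn)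
qed

lemma EYY: assumes "1 \<le> t" "t \<le> T"
  shows "integrable PP (\<lambda>w. Yobs t w * Yobs t w) \<and> measure_pmf.expectation PP (\<lambda>w. Yobs t w * Yobs t w)
     = pit t * (\<Sum>b\<le>r. q b 0 * psecond (pin p00 p10 b))"
proof (rule real_of)
  have "(\<integral>\<^sup>+w. ennreal (Yobs t w * Yobs t w) \<partial>PP) = (\<integral>\<^sup>+w. (\<lambda>L. ennreal ((real (snd (snd (L ! (t - 1)))))^2)) (snd w) \<partial>PP)"
    by (simp add: Yobs_def power2_eq_square)
  also have "\<dots> = ennreal (\<Sum>x0\<le>r. \<nu> x0 * (\<Sum>x1\<le>r. Mp q r (t - 1) x1 x0 * Ml q r 0 x1 * (\<Sum>b\<le>r. q b 0 * psecond (pin p00 p10 b))))"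
    apply (rule top)
    using single2 assms by (auto intro!: sum_nonneg mult_nonneg_nonneg Mp_nonneg Ml_nonneg q0_nonneg mom2_nn)
  also have "\<dots> = ennreal (pit t * (\<Sum>b\<le>r. q b 0 * psecond (pin p00 p10 b)))"
    by (simp add: pit_def sum_distrib_right mult.assoc)
  finally show "(\<integral>\<^sup>+w. ennreal (Yobs t w * Yobs t w) \<partial>PP) = ennreal (pit t * (\<Sum>b\<le>r. q b 0 * psecond (pin p00 p10 b)))" .
  show "0 \<le> Yobs t w * Yobs t w" for w by simp
  show "0 \<le> pit t * (\<Sum>b\<le>r. q b 0 * psecond (pin p00 p10 b))"
    by (auto simp: pit_def intro!: sum_nonneg mult_nonneg_nonneg Mp_nonneg Ml_nonneg q0_nonneg mom2_nn nu_nn)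
qed

lemma EYZ: assumes "1 \<le> t'" "t' < t" "t \<le> T"
  shows "integrable PP (\<lambda>w. Yobs t w * Yobs t' w) \<and> measure_pmf.expectation PP (\<lambda>w. Yobs t w * Yobs t' w)
     = pit t' * Df (t - t' - 1)"
proof (rule real_of)
  have "(\<integral>\<^sup>+w. ennreal (Yobs t w * Yobs t' w) \<partial>PP) = (\<integral>\<^sup>+w. (\<lambda>L. ennreal (real (snd (snd (L ! (t' - 1))))) * ennreal (real (snd (snd (L ! (t - 1)))))) (snd w) \<partial>PP)"
    by (simp add: Yobs_def ennreal_mult mult.commute)
  also have "\<dots> = ennreal (\<Sum>x0\<le>r. \<nu> x0 * (\<Sum>x1\<le>r. Mp q r (t' - 1) x1 x0 * Ml q r 0 x1 * Df (t - 1 - (t' - 1) - 1)))"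
    apply (rule top)
    using pair_chain assms by (auto intro!: sum_nonneg mult_nonneg_nonneg Mp_nonneg Ml_nonneg Df_nn)
  also have "\<dots> = ennreal (pit t' * Df (t - t' - 1))"
    using assms by (simp add: pit_def sum_distrib_right mult.assoc)
  finally show "(\<integral>\<^sup>+w. ennreal (Yobs t w * Yobs t' w) \<partial>PP) = ennreal (pit t' * Df (t - t' - 1))" .
  show "0 \<le> Yobs t w * Yobs t' w" for w by (simp add: Yobs_def)
  show "0 \<le> pit t' * Df (t - t' - 1)"
    by (auto simp: pit_def intro!: sum_nonneg mult_nonneg_nonneg Mp_nonneg Ml_nonneg Df_nn nu_nn)
qed

end

lemma cov_expand:
  fixes P :: "'a pmf"
  assumes "integrable P X" "integrable P Z" "integrable P (\<lambda>w. X w * Z w)"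
  shows "cov P X Z = measure_pmf.expectation P (\<lambda>w. X w * Z w) - measure_pmf.expectation P X * measure_pmf.expectation P Z"
proof -
  define a where "a = measure_pmf.expectation P X"
  define b where "b = measure_pmf.expectation P Z"
  have "cov P X Z = measure_pmf.expectation P (\<lambda>w. (X w * Z w - b * X w) - (a * Z w - a * b))"
    unfolding cov_def a_def[symmetric] b_def[symmetric] by (rule Bochner_Integration.integral_cong) (auto simp: algebra_simps)
  also have "\<dots> = measure_pmf.expectation P (\<lambda>w. X w * Z w) - b * a - (a * b - a * b)"
    using assms by (simp add: a_def b_def)
  finally show ?thesis by (simp add: a_def b_def)
qed



lemma mgf_int:
  assumes "mgf_finite_near_0 p"
  shows "integrable (measure_pmf p) (\<lambda>y. (real y)^2) \<and> integrable (measure_pmf p) (\<lambda>y. real y)"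
proof -
  obtain e where e: "e > 0" and I: "\<And>s. \<bar>s\<bar> < e \<Longrightarrow> integrable (measure_pmf p) (\<lambda>y. exp (s * real y))"
    using assms unfolding mgf_finite_near_0_def by blast
  define s where "s = e / 2"
  have s: "s > 0" "\<bar>s\<bar> < e" using e by (auto simp: s_def)
  have Ie: "integrable (measure_pmf p) (\<lambda>y. (2 / s^2) * exp (s * real y))"
    using I[OF s(2)] by simp
  have bound: "(real y)^2 \<le> (2 / s^2) * exp (s * real y)" for y
  proof -
    have "(s * real y)^2 / 2 \<le> exp (s * real y)"
      using exp_lower_Taylor_quadratic[of "s * real y"] s by (smt (verit) mult_nonneg_nonneg of_nat_0_le_iff)
    then have "s^2 * (real y)^2 \<le> 2 * exp (s * real y)" by (simp add: power_mult_distrib)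
    then show ?thesis using s by (simp add: field_simps)
  qed
  have bound': "norm ((real y)^2) \<le> norm ((2 / s^2) * exp (s * real y))" for y
    using bound[of y] s by simp
  have I2: "integrable (measure_pmf p) (\<lambda>y. (real y)^2)"
    by (rule Bochner_Integration.integrable_bound[OF Ie]) (simp, rule AE_pmfI, rule bound')
  moreover have "integrable (measure_pmf p) (\<lambda>y. real y)"
    by (rule measure_pmf.square_integrable_imp_integrable[OF _ I2]) simp
  ultimately show ?thesis by blast
qed

context hloc begin

lemma Mp_left: "a \<le> r \<Longrightarrow> b \<le> r \<Longrightarrow> Mp q r (Suc k) a b = (\<Sum>w\<le>r. Mf q r a w * Mp q r k w b)"
proof (induction k arbitrary: b)
  case 0
  have "(\<Sum>k\<le>r. (if a = k then 1 else 0) * Mf q r k b) = (\<Sum>k\<le>r. if k = a then Mf q r k b else 0)"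
    by (rule sum.cong) auto
  then have "(\<Sum>k\<le>r. (if a = k then 1 else 0) * Mf q r k b) = Mf q r a b"
    using 0 by simp
  moreover have "(\<Sum>w\<le>r. Mf q r a w * (if w = b then 1 else 0)) = Mf q r a b"
    using 0 by (simp add: sum_mult_delta)
  ultimately show ?case by simp
next
  case (Suc k)
  have "Mp q r (Suc (Suc k)) a b = (\<Sum>j\<le>r. (\<Sum>w\<le>r. Mf q r a w * Mp q r k w j) * Mf q r j b)"
    using Suc by simp
  also have "\<dots> = (\<Sum>w\<le>r. Mf q r a w * (\<Sum>j\<le>r. Mp q r k w j * Mf q r j b))"
    by (simp add: sum_distrib_left sum_distrib_right mult.assoc) (rule sum.swap)
  finally show ?case by simp
qed

lemma Mf0: "Mf q r 0 w = q 0 0 * Ml q r 0 w"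
proof -
  have "Mf q r 0 w = (\<Sum>k\<le>r. if k = 0 then q 0 0 * Ml q r k w else 0)"
    unfolding Mf_def by (rule sum.cong) (auto simp: Ms_def)
  then show ?thesis by simp
qed

lemma Mfb0: "b \<le> r \<Longrightarrow> Mf q r b 0 = q b 0"
proof -
  assume b: "b \<le> r"
  have "Mf q r b 0 = (\<Sum>k\<le>r. if k = 0 then q b 0 else 0)"
    unfolding Mf_def using b by (intro sum.cong) (auto simp: Ms_def Ml_def)
  then show ?thesis by simp
qed

lemma Mmat_pow: "a \<le> r \<Longrightarrow> b \<le> r \<Longrightarrow> (Mmat q r ^\<^sub>m k) $$ (a,b) = Mp q r k a b"
proof (induction k arbitrary: b)
  case 0
  then show ?case by (simp add: Mmat_def)
next
  case (Suc k)
  have car: "Mmat q r \<in> carrier_mat (Suc r) (Suc r)" by (simp add: Mmat_def)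
  have "(Mmat q r ^\<^sub>m Suc k) $$ (a,b) = Matrix.row (Mmat q r ^\<^sub>m k) a \<bullet> col (Mmat q r) b"
    using Suc.prems car by (simp add: pow_mat_dim_square)
  also have "\<dots> = (\<Sum>i\<in>{0..<Suc r}. (Mmat q r ^\<^sub>m k) $$ (a,i) * Mmat q r $$ (i,b))"
    using Suc.prems car by (simp add: scalar_prod_def pow_mat_dim_square)
  also have "\<dots> = (\<Sum>i\<le>r. Mp q r k a i * Mf q r i b)"
    using Suc by (intro sum.cong) (auto simp: Mmat_def Mf_def)
  finally show ?case by simp
qed

end



lemma alg_var:
  fixes pit c2 th1 :: real
  assumes "th1 > 0"
  shows "pit * c2 - (pit * th1) * (pit * th1) = (th1 * (((c2 - th1^2) / th1^2 - 1 / th1) + 1) + 1 - pit * th1) * (pit * th1)"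
  using assms by (simp add: field_simps power2_eq_square)

lemma alg_cross:
  fixes pit pit' th1 q0 m0 m1 A B S :: real
  assumes th: "th1 > 0" and q: "0 < q0" "q0 < 1" and th1: "th1 = q0 * m0 + m1 * (1 - q0)"
    and B: "B = q0 * A + S"
  shows "pit' * (th1 / q0 * (q0 * m0 * A + m1 * S)) - (pit * th1) * (pit' * th1) =
    ((q0 * m0 / th1 - q0 * (1 - q0 * m0 / th1) / (1 - q0)) * (th1 / q0 * A)
     + (1 - q0 * m0 / th1) / (1 - q0) * (th1 / q0 * B) - pit * th1) * (pit' * th1)"
proof -
  have m1: "m1 = (th1 - q0 * m0) / (1 - q0)" using th1 q by (simp add: field_simps)
  have S: "S = B - q0 * A" using B by simp
  have f1: "(1 - q0 * m0 / th1) / (1 - q0) = m1 / th1"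
    unfolding m1 using th q by (simp add: field_simps)
  have f2: "q0 * m0 / th1 - q0 * (1 - q0 * m0 / th1) / (1 - q0) = q0 * (m0 - m1) / th1"
  proof -
    have "q0 * (1 - q0 * m0 / th1) / (1 - q0) = q0 * ((1 - q0 * m0 / th1) / (1 - q0))" by simp
    also have "\<dots> = q0 * (m1 / th1)" by (simp only: f1)
    finally show ?thesis by (simp add: diff_divide_distrib right_diff_distrib)
  qed
  define X where "X = (m0 - m1) * A + m1 * B / q0"
  have c: "(q0 * m0 / th1 - q0 * (1 - q0 * m0 / th1) / (1 - q0)) * (th1 / q0 * A)
     + (1 - q0 * m0 / th1) / (1 - q0) * (th1 / q0 * B) = X"
    unfolding f2 f1 X_def using th q by (simp add: field_simps)
  have d: "th1 / q0 * (q0 * m0 * A + m1 * S) = th1 * X"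
    unfolding X_def S using q by (simp add: field_simps)
  show ?thesis unfolding c d by (simp add: algebra_simps)
qed



context hloc4 begin

lemma Gf_form: "b \<le> r \<Longrightarrow> q 0 0 \<noteq> 0 \<Longrightarrow> Gf k b = theta1 q r p00 p10 * Mp q r (Suc k) 0 b / q 0 0"
proof -
  assume b: "b \<le> r" and q0: "q 0 0 \<noteq> 0"
  have "Mp q r (Suc k) 0 b = q 0 0 * (\<Sum>w\<le>r. Ml q r 0 w * Mp q r k w b)"
    using Mp_left[of 0 b k] b by (simp add: Mf0 sum_distrib_left mult.assoc del: Mp.simps(2))
  then have S: "(\<Sum>w\<le>r. Ml q r 0 w * Mp q r k w b) = Mp q r (Suc k) 0 b / q 0 0"
    using q0 by (simp add: field_simps del: Mp.simps(2))
  have "Gf k b = theta1 q r p00 p10 * (\<Sum>w\<le>r. Ml q r 0 w * Mp q r k w b)"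
    by (simp add: Gf_def sum_distrib_left mult.commute mult.left_commute)
  then show ?thesis using S by simp
qed

lemma sum_split0: "(\<Sum>b\<le>r. f b) = f 0 + (\<Sum>b\<in>{..r} - {0}. f b)"
  by (subst sum.remove[of _ 0]) auto

lemma Df_form: "q 0 0 \<noteq> 0 \<Longrightarrow> Df k = theta1 q r p00 p10 / q 0 0 *
   (q 0 0 * pmean p00 * Mp q r (Suc k) 0 0 + pmean p10 * (\<Sum>b\<in>{..r} - {0}. q b 0 * Mp q r (Suc k) 0 b))"
proof -
  assume q0: "q 0 0 \<noteq> 0"
  have "Df k = (\<Sum>b\<le>r. theta1 q r p00 p10 / q 0 0 * (q b 0 * pmean (pin p00 p10 b) * Mp q r (Suc k) 0 b))"
    unfolding Df_def by (intro sum.cong refl) (simp add: Gf_form q0)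
  also have "\<dots> = theta1 q r p00 p10 / q 0 0 * (\<Sum>b\<le>r. q b 0 * pmean (pin p00 p10 b) * Mp q r (Suc k) 0 b)"
    by (simp add: sum_distrib_left)
  also have "(\<Sum>b\<le>r. q b 0 * pmean (pin p00 p10 b) * Mp q r (Suc k) 0 b)
     = q 0 0 * pmean p00 * Mp q r (Suc k) 0 0 + pmean p10 * (\<Sum>b\<in>{..r} - {0}. q b 0 * Mp q r (Suc k) 0 b)"
    by (subst sum_split0) (simp add: pin_def sum_distrib_left mult.assoc mult.left_commute del: Mp.simps(2))
  finally show ?thesis .
qed

lemma B_form: "Mp q r (Suc (Suc k)) 0 0 = q 0 0 * Mp q r (Suc k) 0 0 + (\<Sum>b\<in>{..r} - {0}. q b 0 * Mp q r (Suc k) 0 b)"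
proof -
  have "Mp q r (Suc (Suc k)) 0 0 = (\<Sum>b\<le>r. q b 0 * Mp q r (Suc k) 0 b)"
    by (simp only: Mp.simps(2)) (intro sum.cong refl, simp add: Mfb0)
  then show ?thesis by (simp add: sum_split0)
qed

lemma th1_form: "theta1 q r p00 p10 = q 0 0 * pmean p00 + pmean p10 * (1 - q 0 0)"
proof -
  have s: "(\<Sum>b\<in>{..r} - {0}. q b 0) = 1 - q 0 0"
    using q_stoch r sum_split0[of "\<lambda>b. q b 0"] by auto
  have "theta1 q r p00 p10 = q 0 0 * pmean p00 + (\<Sum>b\<in>{..r} - {0}. q b 0 * pmean p10)"
    unfolding theta1_def by (subst sum_split0) (simp add: pin_def)
  then show ?thesis using s by (simp add: sum_distrib_left[symmetric] mult.commute)
qed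

end


theorem mainTheorem5:
  fixes r T :: nat and q :: "nat \<Rightarrow> nat \<Rightarrow> real" and \<nu> :: "nat \<Rightarrow> real"
    and p00 p10 :: "nat pmf"
  assumes r: "r \<ge> 1" and T: "T \<ge> 1"
    and q_range: "\<forall>x\<le>r. \<forall>z<r. 0 \<le> q x z \<and> q x z \<le> 1"
    and q_stoch: "\<forall>z<r. (\<Sum>x\<le>r. q x z) = 1"
    and nu_nonneg: "\<forall>x\<le>r. 0 \<le> \<nu> x" and nu_supp: "\<forall>x>r. \<nu> x = 0"
    and nu_sum: "(\<Sum>x\<le>r. \<nu> x) = 1"
    and q00: "0 < q 0 0" "q 0 0 < 1"
    and th1: "theta1 q r p00 p10 > 0"
    and mgf: "mgf_finite_near_0 p00" "mgf_finite_near_0 p10"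
    and diag: "diagonalizable (Mmat q r)"
  defines "P \<equiv> htmm \<nu> q r T p00 p10"
    and "\<mu> \<equiv> \<lambda>t. measure_pmf.expectation (htmm \<nu> q r T p00 p10) (Yobs t)"
    and "\<theta>\<^sub>1 \<equiv> theta1 q r p00 p10" and "\<theta>\<^sub>2 \<equiv> theta2 q r p00 p10"
    and "\<theta>\<^sub>3 \<equiv> theta3 q r p00 p10"
  shows "(\<forall>t\<in>{1..T}. cov P (Yobs t) (Yobs t) = (\<theta>\<^sub>1 * (\<theta>\<^sub>3 + 1) + 1 - \<mu> t) * \<mu> t)
       \<and> (\<forall>t t'. 1 \<le> t' \<and> t' < t \<and> t \<le> T \<longrightarrow>
            cov P (Yobs t) (Yobs t') =
              ((\<theta>\<^sub>2 - q 0 0 * (1 - \<theta>\<^sub>2) / (1 - q 0 0)) * mu0 q r p00 p10 (t - t')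
               + (1 - \<theta>\<^sub>2) / (1 - q 0 0) * mu0 q r p00 p10 (t - t' + 1) - \<mu> t) * \<mu> t')"
proof -
  interpret H: hloc4 r q p00 p10 \<nu> T
  proof (unfold_locales)
    show "r \<ge> 1" by (rule r)
    show "\<forall>x\<le>r. \<forall>z<r. 0 \<le> q x z \<and> q x z \<le> 1" by (rule q_range)
    show "\<forall>z<r. (\<Sum>x\<le>r. q x z) = 1" by (rule q_stoch)
    show "\<forall>x\<le>r. 0 \<le> \<nu> x" by (rule nu_nonneg)
    show "\<forall>x>r. \<nu> x = 0" by (rule nu_supp)
    show "(\<Sum>x\<le>r. \<nu> x) = 1" by (rule nu_sum)
    show "integrable (measure_pmf (pin p00 p10 b)) (\<lambda>y. real y)" for b
      using mgf_int[OF mgf(1)] mgf_int[OF mgf(2)] by (simp add: pin_def)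
    show "integrable (measure_pmf (pin p00 p10 b)) (\<lambda>y. (real y)^2)" for b
      using mgf_int[OF mgf(1)] mgf_int[OF mgf(2)] by (simp add: pin_def)
  qed
  have q0: "q 0 0 \<noteq> 0" "1 - q 0 0 \<noteq> 0" using q00 by auto
  have mu: "\<mu> t = H.pit t * \<theta>\<^sub>1" if "1 \<le> t" "t \<le> T" for t
    using H.EY[OF that] unfolding \<mu>_def \<theta>\<^sub>1_def by simp
  have part1: "cov P (Yobs t) (Yobs t) = (\<theta>\<^sub>1 * (\<theta>\<^sub>3 + 1) + 1 - \<mu> t) * \<mu> t" if t: "t \<in> {1..T}" for t
  proof -
    have t1: "1 \<le> t" "t \<le> T" using t by auto
    have "cov P (Yobs t) (Yobs t) = H.pit t * (\<Sum>b\<le>r. q b 0 * psecond (pin p00 p10 b)) - (H.pit t * \<theta>\<^sub>1) * (H.pit t * \<theta>\<^sub>1)"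
      unfolding P_def using H.EY[OF t1] H.EYY[OF t1] cov_expand[of "htmm \<nu> q r T p00 p10" "Yobs t" "Yobs t"]
      by (simp add: \<theta>\<^sub>1_def)
    also have "\<dots> = (\<theta>\<^sub>1 * (\<theta>\<^sub>3 + 1) + 1 - H.pit t * \<theta>\<^sub>1) * (H.pit t * \<theta>\<^sub>1)"
      unfolding \<theta>\<^sub>3_def theta3_def inner_var_def \<theta>\<^sub>1_def[symmetric]
      by (rule alg_var) (use th1 \<theta>\<^sub>1_def in simp)
    finally show ?thesis using mu[OF t1] by simp
  qed
  have part2: "cov P (Yobs t) (Yobs t') =
              ((\<theta>\<^sub>2 - q 0 0 * (1 - \<theta>\<^sub>2) / (1 - q 0 0)) * mu0 q r p00 p10 (t - t')
               + (1 - \<theta>\<^sub>2) / (1 - q 0 0) * mu0 q r p00 p10 (t - t' + 1) - \<mu> t) * \<mu> t'"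
    if tt: "1 \<le> t'" "t' < t" "t \<le> T" for t t'
  proof -
    define k where "k = t - t' - 1"
    have k1: "t - t' = Suc k" and k2: "t - t' + 1 = Suc (Suc k)" using tt by (auto simp: k_def)
    define A where "A = Mp q r (Suc k) 0 0"
    define B where "B = Mp q r (Suc (Suc k)) 0 0"
    define S where "S = (\<Sum>b\<in>{..r} - {0}. q b 0 * Mp q r (Suc k) 0 b)"
    have ht: "1 \<le> t" "t \<le> T" "1 \<le> t'" "t' \<le> T" using tt by auto
    have "cov P (Yobs t) (Yobs t') = H.pit t' * H.Df k - (H.pit t * \<theta>\<^sub>1) * (H.pit t' * \<theta>\<^sub>1)"
      unfolding P_def using H.EY[OF ht(1,2)] H.EY[OF ht(3,4)] H.EYZ[OF tt] cov_expand[of "htmm \<nu> q r T p00 p10" "Yobs t" "Yobs t'"]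
      by (simp add: \<theta>\<^sub>1_def k_def)
    also have "H.Df k = \<theta>\<^sub>1 / q 0 0 * (q 0 0 * pmean p00 * A + pmean p10 * S)"
      using H.Df_form[OF q0(1)] by (simp add: \<theta>\<^sub>1_def A_def S_def)
    also have "H.pit t' * (\<theta>\<^sub>1 / q 0 0 * (q 0 0 * pmean p00 * A + pmean p10 * S)) - (H.pit t * \<theta>\<^sub>1) * (H.pit t' * \<theta>\<^sub>1)
      = ((q 0 0 * pmean p00 / \<theta>\<^sub>1 - q 0 0 * (1 - q 0 0 * pmean p00 / \<theta>\<^sub>1) / (1 - q 0 0)) * (\<theta>\<^sub>1 / q 0 0 * A)
     + (1 - q 0 0 * pmean p00 / \<theta>\<^sub>1) / (1 - q 0 0) * (\<theta>\<^sub>1 / q 0 0 * B) - H.pit t * \<theta>\<^sub>1) * (H.pit t' * \<theta>\<^sub>1)"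
      by (rule alg_cross) (use th1 q00 H.th1_form H.B_form in \<open>auto simp: \<theta>\<^sub>1_def A_def B_def S_def\<close>)
    also have "\<theta>\<^sub>1 / q 0 0 * A = mu0 q r p00 p10 (t - t')"
      unfolding mu0_def k1 A_def \<theta>\<^sub>1_def using H.Mmat_pow[of 0 0 "Suc k"] by simp
    also have "\<theta>\<^sub>1 / q 0 0 * B = mu0 q r p00 p10 (t - t' + 1)"
      unfolding mu0_def k2 B_def \<theta>\<^sub>1_def using H.Mmat_pow[of 0 0 "Suc (Suc k)"] by simp
    also have "q 0 0 * pmean p00 / \<theta>\<^sub>1 = \<theta>\<^sub>2"
      by (simp add: \<theta>\<^sub>2_def theta2_def \<theta>\<^sub>1_def)
    finally show ?thesis using mu[OF ht(1,2)] mu[OF ht(3,4)] by simp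
  qed
  show ?thesis using part1 part2 by blast
qed


end
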